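(* Let $T$ be a rooted tree on vertex set $[n]$ and let $p\in[n]^n$ be a prime parking function on $T$. Then the final driver (driver $n$) parks at the root of $T$.
   Context: Edges of $T$ are oriented towards the root. For $p\in[n]^n$, drivers $1,\dots,n$ arrive in order; driver $i$ parks at $p_i$ if unoccupied, otherwise follows the directed path towards the root and parks at the first unoccupied vertex, leaving if none exists. $(T,p)$ is a parking function if all drivers park. $T_v$ is the set of vertices with a directed path to $v$ (including $v$); the parking function $(T,p)$ is prime if $|T_v|<|\{i:p_i\in T_v\}|$ for every non-root vertex $v$. *)

theory Defs
  imports Main
begin

text \<open>A rooted tree on vertex set {1..n} with root r is given by a parent map par:
  the (directed) edges are v \<rightarrow> par v for every non-root vertex v, oriented towards the root.
  The value par r is irrelevant.\<close>

definition tree_edges :: "nat \<Rightarrow> nat \<Rightarrow> (nat \<Rightarrow> nat) \<Rightarrow> (nat \<times> nat) set" where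
  "tree_edges n r par = {(v, par v) | v. v \<in> {1..n} \<and> v \<noteq> r}"

definition rooted_tree :: "nat \<Rightarrow> nat \<Rightarrow> (nat \<Rightarrow> nat) \<Rightarrow> bool" where
  "rooted_tree n r par \<longleftrightarrow> r \<in> {1..n} \<and>
     (\<forall>v\<in>{1..n}. v \<noteq> r \<longrightarrow> par v \<in> {1..n}) \<and>
     (\<forall>v\<in>{1..n}. (v, r) \<in> (tree_edges n r par)\<^sup>*)"

definition depth :: "nat \<Rightarrow> (nat \<Rightarrow> nat) \<Rightarrow> nat \<Rightarrow> nat" where
  "depth r par v = (LEAST k. (par ^^ k) v = r)"

definition spot :: "nat \<Rightarrow> (nat \<Rightarrow> nat) \<Rightarrow> nat set \<Rightarrow> nat \<Rightarrow> nat option" where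
  "spot r par S v =
     (if \<exists>k\<le>depth r par v. (par ^^ k) v \<notin> S
      then Some ((par ^^ (LEAST k. k \<le> depth r par v \<and> (par ^^ k) v \<notin> S)) v)
      else None)"

fun occupied :: "nat \<Rightarrow> (nat \<Rightarrow> nat) \<Rightarrow> (nat \<Rightarrow> nat) \<Rightarrow> nat \<Rightarrow> nat set" where
  "occupied r par p 0 = {}"
| "occupied r par p (Suc i) =
     (case spot r par (occupied r par p i) (p (Suc i)) of
        None \<Rightarrow> occupied r par p i
      | Some u \<Rightarrow> insert u (occupied r par p i))"

text \<open>Where driver i (1-indexed) parks, None if driver i leaves.\<close>
definition parks_at :: "nat \<Rightarrow> (nat \<Rightarrow> nat) \<Rightarrow> (nat \<Rightarrow> nat) \<Rightarrow> nat \<Rightarrow> nat option" where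
  "parks_at r par p i = spot r par (occupied r par p (i - 1)) (p i)"

definition is_parking_function :: "nat \<Rightarrow> nat \<Rightarrow> (nat \<Rightarrow> nat) \<Rightarrow> (nat \<Rightarrow> nat) \<Rightarrow> bool" where
  "is_parking_function n r par p \<longleftrightarrow>
     (\<forall>i\<in>{1..n}. p i \<in> {1..n}) \<and> (\<forall>i\<in>{1..n}. parks_at r par p i \<noteq> None)"

definition subtree :: "nat \<Rightarrow> nat \<Rightarrow> (nat \<Rightarrow> nat) \<Rightarrow> nat \<Rightarrow> nat set" where
  "subtree n r par v = {u \<in> {1..n}. (u, v) \<in> (tree_edges n r par)\<^sup>*}"

definition is_prime_parking_function :: "nat \<Rightarrow> nat \<Rightarrow> (nat \<Rightarrow> nat) \<Rightarrow> (nat \<Rightarrow> nat) \<Rightarrow> bool" where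
  "is_prime_parking_function n r par p \<longleftrightarrow> is_parking_function n r par p \<and>
     (\<forall>v\<in>{1..n}. v \<noteq> r \<longrightarrow>
        card (subtree n r par v) < card {i \<in> {1..n}. p i \<in> subtree n r par v})"

end

theory Submission
  imports Defs
begin

lemma path_from_rtrancl:
  assumes "(u, v) \<in> (tree_edges n r par)\<^sup>*"
  shows "\<exists>j. (par^^j) u = v \<and> (\<forall>i<j. (par^^i) u \<noteq> r \<and> (par^^i) u \<in> {1..n})"
  using assms
proof (induction rule: converse_rtrancl_induct)
  case base show ?case by (intro exI[of _ 0]) auto
next
  case (step x y)
  then obtain j where j: "(par^^j) y = v" "\<forall>i<j. (par^^i) y \<noteq> r \<and> (par^^i) y \<in> {1..n}" by blast
  from step(1) have y: "y = par x" "x \<in> {1..n}" "x \<noteq> r" by (auto simp: tree_edges_def)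
  have "\<forall>i<Suc j. (par^^i) x \<noteq> r \<and> (par^^i) x \<in> {1..n}"
  proof (intro allI impI)
    fix i assume "i < Suc j"
    then show "(par^^i) x \<noteq> r \<and> (par^^i) x \<in> {1..n}"
      using j y by (cases i) (auto simp: funpow_Suc_right simp del: funpow.simps)
  qed
  moreover have "(par^^Suc j) x = v" using j y by (simp add: funpow_Suc_right del: funpow.simps)
  ultimately show ?case by blast
qed

lemma rtrancl_from_path:
  assumes "\<forall>i<k. (par^^i) x \<noteq> r \<and> (par^^i) x \<in> {1..n}"
  shows "(x, (par^^k) x) \<in> (tree_edges n r par)\<^sup>*"
  using assms
proof (induction k)
  case 0 then show ?case by simp
next
  case (Suc k)
  then have "(x, (par^^k) x) \<in> (tree_edges n r par)\<^sup>*" by auto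
  moreover have "((par^^k) x, par ((par^^k) x)) \<in> tree_edges n r par"
    using Suc.prems by (auto simp: tree_edges_def)
  ultimately show ?case by (simp add: rtrancl_into_rtrancl)
qed

lemma depth_props:
  assumes "rooted_tree n r par" "x \<in> {1..n}"
  shows "(par^^depth r par x) x = r"
    "\<forall>i<depth r par x. (par^^i) x \<noteq> r \<and> (par^^i) x \<in> {1..n}"
proof -
  have "(x, r) \<in> (tree_edges n r par)\<^sup>*" using assms by (auto simp: rooted_tree_def)
  from path_from_rtrancl[OF this] obtain d where
    d: "(par^^d) x = r" "\<forall>i<d. (par^^i) x \<noteq> r \<and> (par^^i) x \<in> {1..n}" by blast
  have "depth r par x = d" unfolding depth_def
    by (rule Least_equality) (use d in \<open>auto simp: not_le[symmetric]\<close>)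
  then show "(par^^depth r par x) x = r"
    "\<forall>i<depth r par x. (par^^i) x \<noteq> r \<and> (par^^i) x \<in> {1..n}" using d by auto
qed

lemma depth_in:
  assumes "rooted_tree n r par" "x \<in> {1..n}" "m \<le> depth r par x"
  shows "(par^^m) x \<in> {1..n}"
proof (cases "m < depth r par x")
  case True then show ?thesis using depth_props[OF assms(1,2)] by auto
next
  case False then have "m = depth r par x" using assms(3) by auto
  then show ?thesis using depth_props[OF assms(1,2)] assms(1) by (auto simp: rooted_tree_def)
qed

lemma subtree_path:
  assumes "rooted_tree n r par" "u \<in> subtree n r par v"
  shows "\<exists>j \<le> depth r par u. (par^^j) u = v"
proof -
  have u: "u \<in> {1..n}" "(u, v) \<in> (tree_edges n r par)\<^sup>*" using assms(2) by (auto simp: subtree_def)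
  from path_from_rtrancl[OF u(2)] obtain j where
    j: "(par^^j) u = v" "\<forall>i<j. (par^^i) u \<noteq> r \<and> (par^^i) u \<in> {1..n}" by blast
  have "j \<le> depth r par u"
  proof (rule ccontr)
    assume "\<not> j \<le> depth r par u"
    then have "depth r par u < j" by simp
    then show False using j(2) depth_props(1)[OF assms(1) u(1)] by auto
  qed
  then show ?thesis using j by blast
qed

lemma subtree_mem:
  assumes "rooted_tree n r par" "u \<in> {1..n}" "j \<le> depth r par u" "m \<le> j"
  shows "(par^^m) u \<in> subtree n r par ((par^^j) u)"
proof -
  define w where "w = (par^^m) u"
  have w: "w \<in> {1..n}" unfolding w_def using depth_in assms by auto
  have eq: "(par^^i) w = (par^^(i+m)) u" for i
    unfolding w_def by (simp add: funpow_add)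
  have "\<forall>i<j-m. (par^^i) w \<noteq> r \<and> (par^^i) w \<in> {1..n}"
    using depth_props(2)[OF assms(1,2)] assms(3,4) unfolding eq by auto
  from rtrancl_from_path[OF this] have "(w, (par^^(j-m)) w) \<in> (tree_edges n r par)\<^sup>*" .
  moreover have "(par^^(j-m)) w = (par^^j) u" unfolding eq using assms(4) by simp
  ultimately show ?thesis using w unfolding subtree_def w_def by auto
qed

lemma spot_Some:
  assumes "spot r par S x = Some s"
  shows "s \<notin> S \<and> (\<exists>m \<le> depth r par x. s = (par^^m) x \<and>
     (\<forall>k. k \<le> depth r par x \<and> (par^^k) x \<notin> S \<longrightarrow> m \<le> k))"
proof -
  let ?P = "\<lambda>k. k \<le> depth r par x \<and> (par^^k) x \<notin> S"
  have ex: "\<exists>k. ?P k" and s: "s = (par^^(LEAST k. ?P k)) x"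
    using assms unfolding spot_def by (auto split: if_splits)
  have "?P (LEAST k. ?P k)" using LeastI_ex[OF ex] .
  moreover have "\<forall>k. ?P k \<longrightarrow> (LEAST k. ?P k) \<le> k" by (auto intro: Least_le)
  ultimately show ?thesis using s by blast
qed

lemma spot_in_subtree:
  assumes "rooted_tree n r par" "x \<in> subtree n r par v" "v \<notin> S"
  shows "\<exists>s. spot r par S x = Some s \<and> s \<in> subtree n r par v"
proof -
  have x: "x \<in> {1..n}" using assms(2) by (auto simp: subtree_def)
  obtain j where j: "j \<le> depth r par x" "(par^^j) x = v" using subtree_path[OF assms(1,2)] by blast
  have "\<exists>k\<le>depth r par x. (par^^k) x \<notin> S" using j assms(3) by blast
  then obtain s where s: "spot r par S x = Some s" unfolding spot_def by auto
  from spot_Some[OF s] obtain m where m: "m \<le> depth r par x" "s = (par^^m) x" "m \<le> j"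
    using j assms(3) by blast
  have "s \<in> subtree n r par v" using subtree_mem[OF assms(1) x j(1) m(3)] m j by simp
  then show ?thesis using s by blast
qed

lemma occ_mono1: "occupied r par p i \<subseteq> occupied r par p (Suc i)"
  by (auto split: option.split)

lemma occ_mono: "i \<le> i' \<Longrightarrow> occupied r par p i \<subseteq> occupied r par p i'"
  by (rule lift_Suc_mono_le[of "occupied r par p"]) (use occ_mono1 in blast)+

lemma occ_parks:
  assumes "parks_at r par p i = Some s" "i \<ge> 1"
  shows "s \<in> occupied r par p i" "s \<notin> occupied r par p (i - 1)"
proof -
  obtain k where k: "i = Suc k" using assms(2) by (cases i) auto
  show "s \<in> occupied r par p i" using assms(1) unfolding k parks_at_def by simp
  show "s \<notin> occupied r par p (i - 1)" using spot_Some[of r par] assms(1)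
    unfolding parks_at_def by blast
qed

theorem proposition4p3:
  fixes n r :: nat and par p :: "nat \<Rightarrow> nat"
  assumes "rooted_tree n r par"
    and "is_prime_parking_function n r par p"
  shows "parks_at r par p n = Some r"
proof (rule ccontr)
  assume ne: "parks_at r par p n \<noteq> Some r"
  have rt: "r \<in> {1..n}" using assms(1) by (auto simp: rooted_tree_def)
  then have n1: "n \<ge> 1" by auto
  have pf: "\<forall>i\<in>{1..n}. p i \<in> {1..n}" "\<forall>i\<in>{1..n}. parks_at r par p i \<noteq> None"
    "\<forall>v\<in>{1..n}. v \<noteq> r \<longrightarrow>
        card (subtree n r par v) < card {i \<in> {1..n}. p i \<in> subtree n r par v}"
    using assms(2) by (auto simp: is_prime_parking_function_def is_parking_function_def)
  obtain v where v: "parks_at r par p n = Some v" using pf(2) n1 by fastforce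
  have vr: "v \<noteq> r" using v ne by auto
  obtain m where m: "m \<le> depth r par (p n)" "v = (par^^m) (p n)"
    using spot_Some[of r par] v unfolding parks_at_def by blast
  have vn: "v \<in> {1..n}" using depth_in[OF assms(1) _ m(1)] m(2) pf(1) n1 by auto
  have vocc: "v \<notin> occupied r par p (n - 1)" using occ_parks(2)[OF v n1] .
  let ?T = "subtree n r par v"
  have finT: "finite ?T" by (simp add: subtree_def)
  have vT: "v \<in> ?T" using vn by (simp add: subtree_def)
  define A where "A = {i \<in> {1..n-1}. p i \<in> ?T}"
  define f where "f i = the (parks_at r par p i)" for i
  have fprops: "parks_at r par p i = Some (f i) \<and> f i \<in> ?T - {v}" if "i \<in> A" for i
  proof -
    have i: "1 \<le> i" "i \<le> n - 1" "p i \<in> ?T" using that by (auto simp: A_def)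
    have "i - 1 \<le> n - 1" using i by simp
    then have "v \<notin> occupied r par p (i - 1)" using vocc occ_mono[of "i - 1" "n - 1" r par p] by blast
    from spot_in_subtree[OF assms(1) i(3) this] obtain s where
      s: "parks_at r par p i = Some s" "s \<in> ?T" unfolding parks_at_def by blast
    have "s \<in> occupied r par p (n - 1)"
      using occ_parks(1)[OF s(1) i(1)] occ_mono[OF i(2)] by auto
    then show ?thesis using s vocc by (auto simp: f_def)
  qed
  have inj: "inj_on f A"
  proof (rule inj_onI)
    fix i i' assume ii: "i \<in> A" "i' \<in> A" "f i = f i'"
    show "i = i'"
    proof (rule ccontr)
      assume "i \<noteq> i'"
      then consider "i < i'" | "i' < i" by linarith
      then show False
      proof cases
        case 1
        have le: "i \<le> i' - 1" using 1 by simp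
        have "f i \<in> occupied r par p i"
          using occ_parks(1)[of r par p i "f i"] fprops[OF ii(1)] ii(1) by (auto simp: A_def)
        then have "f i \<in> occupied r par p (i' - 1)" using occ_mono[OF le, of r par p] by blast
        moreover have "f i' \<notin> occupied r par p (i' - 1)"
          using occ_parks(2)[of r par p i' "f i'"] fprops[OF ii(2)] ii(2) by (auto simp: A_def)
        ultimately show False using ii(3) by simp
      next
        case 2
        have le: "i' \<le> i - 1" using 2 by simp
        have "f i' \<in> occupied r par p i'"
          using occ_parks(1)[of r par p i' "f i'"] fprops[OF ii(2)] ii(2) by (auto simp: A_def)
        then have "f i' \<in> occupied r par p (i - 1)" using occ_mono[OF le, of r par p] by blast
        moreover have "f i \<notin> occupied r par p (i - 1)"
          using occ_parks(2)[of r par p i "f i"] fprops[OF ii(1)] ii(1) by (auto simp: A_def)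
        ultimately show False using ii(3) by simp
      qed
    qed
  qed
  have "card A = card (f ` A)" using inj by (simp add: card_image)
  also have "\<dots> \<le> card (?T - {v})"
    by (rule card_mono) (use finT fprops in auto)
  also have "\<dots> = card ?T - 1" using vT finT by simp
  finally have cA: "card A \<le> card ?T - 1" .
  have "{i \<in> {1..n}. p i \<in> ?T} \<subseteq> insert n A" by (auto simp: A_def)
  then have "card {i \<in> {1..n}. p i \<in> ?T} \<le> card (insert n A)"
    by (rule card_mono[rotated]) (simp add: A_def)
  also have "\<dots> \<le> Suc (card A)" by (simp add: card_insert_le_m1 A_def card_insert_if)
  finally have c1: "card {i \<in> {1..n}. p i \<in> ?T} \<le> Suc (card A)" .
  have "card ?T > 0" using vT finT card_gt_0_iff[of ?T] by blast
  then have "card {i \<in> {1..n}. p i \<in> ?T} \<le> card ?T" using cA c1 by linarith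
  then show False using pf(3) vn vr by fastforce
qed

end
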